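(* Fix a horizon $T\in\mathbb{N}$, demands $D_1,\dots,D_T\in\mathbb{R}$, prices $\lambda_1,\dots,\lambda_T\ge 0$, a degradation cost $c\ge 0$, power limit $\overline{P}>0$, energy limits $0\le \underline{E}\le \overline{E}$, efficiency $\eta\in(0,1]$ and an initial state of charge $e_1\in[\underline{E},\overline{E}]$. Let $S$ denote the set of $(p,d,q,e)$ with $p\in\mathbb{R}$, $d,q\in\mathbb{R}^T$, $e=(e_2,\dots,e_{T+1})\in\mathbb{R}^T$ satisfying, for all $t=1,\dots,T$: $$p\ge D_t-d_t+q_t,\qquad e_{t+1}=e_t-d_t/\eta+\eta q_t,\qquad 0\le d_t,q_t\le \overline{P},\qquad \underline{E}\le e_{t+1}\le \overline{E},$$ and assume $S\neq\emptyset$. Combined problem: for a peak-demand charge $\kappa>0$, $$\min_{(p,d,q,e)\in S}\ \sum_{t=1}^T\big[c\,d_t+\lambda_t(D_t-d_t+q_t)\big]+\kappa p.$$ Stage 1 (peak shaving): for $\delta>0$, $$\min_{(p,d,q,e)\in S}\ p+\delta\sum_{t=1}^T e_{t+1},$$ with an optimal solution $(p^*,d^*,q^*,e^* )$. Stage 2 (arbitrage): given $(p^*,e^* )$, $$\min_{d,q,e}\ \sum_{t=1}^T\big[c\,d_t-\lambda_t(d_t-q_t)\big]$$ subject to $p^*\ge D_t-d_t+q_t$, $e_{t+1}\ge e^*_{t+1}$, $e_{t+1}=e_t-d_t/\eta+\eta q_t$, $0\le d_t,q_t\le\overline{P}$, $\underline{E}\le e_{t+1}\le\overline{E}$ for all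 $t=1,\dots,T$. Claim: if $\delta>0$ is sufficiently small and $\kappa$ is sufficiently large relative to $c$ and the $\lambda_t$, then solving Stage 1 followed by Stage 2 is equivalent to solving the combined problem; that is, the optimal peak of the combined problem equals $p^*$, and for any optimal solution $(d,q,e)$ of Stage 2, the point $(p^*,d,q,e)$ is an optimal solution of the combined problem, with combined optimal value equal to $\sum_{t=1}^T\lambda_tD_t+\kappa p^*+(\text{optimal value of Stage 2})$.
   Context: This models a behind-the-meter battery in a building: $d_t$ and $q_t$ are the discharge and charge energy in timestep $t$, $e_{t+1}$ is the state of charge after timestep $t$, $p$ is the peak net demand over the horizon, $D_t-d_t+q_t$ is the net demand in timestep $t$, $\kappa$ is the peak demand charge, $\lambda_t$ the real-time energy price and $c$ the per-unit battery degradation cost. The term $\delta\sum_t e_{t+1}$ in Stage 1 is a small tie-breaking term selecting a low state-of-charge trajectory among peak-minimizing solutions. *)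

theory Defs
  imports Complex_Main
begin

type_synonym point = "real \<times> (nat \<Rightarrow> real) \<times> (nat \<Rightarrow> real) \<times> (nat \<Rightarrow> real)"
type_synonym point2 = "(nat \<Rightarrow> real) \<times> (nat \<Rightarrow> real) \<times> (nat \<Rightarrow> real)"

text \<open>Vectors indexed by t = 1..T are functions nat => real; the state of charge
  after timestep t is e (Suc t); the initial state of charge e_1 is the fixed
  parameter e1 (the value e 1 of the decision vector is irrelevant).\<close>

definition prev_soc :: "real \<Rightarrow> (nat \<Rightarrow> real) \<Rightarrow> nat \<Rightarrow> real" where
  "prev_soc e1 e t = (if t = 1 then e1 else e t)"

definition feasS ::
  "nat \<Rightarrow> (nat \<Rightarrow> real) \<Rightarrow> real \<Rightarrow> real \<Rightarrow> real \<Rightarrow> real \<Rightarrow> real \<Rightarrow> point set" where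
  "feasS T D Pmax Elo Ehi eta e1 =
     {(p, d, q, e). \<forall>t\<in>{1..T}.
        p \<ge> D t - d t + q t \<and>
        e (Suc t) = prev_soc e1 e t - d t / eta + eta * q t \<and>
        0 \<le> d t \<and> d t \<le> Pmax \<and> 0 \<le> q t \<and> q t \<le> Pmax \<and>
        Elo \<le> e (Suc t) \<and> e (Suc t) \<le> Ehi}"

definition stage2_feas ::
  "nat \<Rightarrow> (nat \<Rightarrow> real) \<Rightarrow> real \<Rightarrow> real \<Rightarrow> real \<Rightarrow> real \<Rightarrow> real \<Rightarrow> real \<Rightarrow> (nat \<Rightarrow> real) \<Rightarrow> point2 set" where
  "stage2_feas T D Pmax Elo Ehi eta e1 pstar estar =
     {(d, q, e). (pstar, d, q, e) \<in> feasS T D Pmax Elo Ehi eta e1 \<and>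
        (\<forall>t\<in>{1..T}. e (Suc t) \<ge> estar (Suc t))}"

definition combined_obj ::
  "nat \<Rightarrow> real \<Rightarrow> (nat \<Rightarrow> real) \<Rightarrow> (nat \<Rightarrow> real) \<Rightarrow> real \<Rightarrow> point \<Rightarrow> real" where
  "combined_obj T c lam D kappa x = (case x of (p, d, q, e) \<Rightarrow>
     (\<Sum>t = 1..T. c * d t + lam t * (D t - d t + q t)) + kappa * p)"

definition stage1_obj :: "nat \<Rightarrow> real \<Rightarrow> point \<Rightarrow> real" where
  "stage1_obj T delta x = (case x of (p, d, q, e) \<Rightarrow> p + delta * (\<Sum>t = 1..T. e (Suc t)))"

definition stage2_obj :: "nat \<Rightarrow> real \<Rightarrow> (nat \<Rightarrow> real) \<Rightarrow> point2 \<Rightarrow> real" where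
  "stage2_obj T c lam y = (case y of (d, q, e) \<Rightarrow> (\<Sum>t = 1..T. c * d t - lam t * (d t - q t)))"

definition is_min :: "'a set \<Rightarrow> ('a \<Rightarrow> real) \<Rightarrow> 'a \<Rightarrow> bool" where
  "is_min A f x \<longleftrightarrow> x \<in> A \<and> (\<forall>y\<in>A. f x \<le> f y)"

end

theory Submission
  imports Defs "HOL-Analysis.Analysis"
begin

lemma compact_box_fun:
  assumes "\<And>i. compact (K i)"
  shows "compact (Pi UNIV K :: (nat \<Rightarrow> real) set)"
proof -
  have "compactin (product_topology (\<lambda>i. euclidean) UNIV) (PiE UNIV K)"
    using assms by (simp add: compactin_PiE)
  then show ?thesis by (simp add: euclidean_product_topology PiE_UNIV_domain)
qed

lemma cont_fst_coord: "continuous_on UNIV (\<lambda>y::(nat\<Rightarrow>real)\<times>'b::topological_space. fst y t)"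
  by (rule continuous_on_product_then_coordinatewise) (intro continuous_intros)
lemma cont_fst_snd_coord: "continuous_on UNIV (\<lambda>y::'a::topological_space\<times>(nat\<Rightarrow>real)\<times>'b::topological_space. fst (snd y) t)"
  by (rule continuous_on_product_then_coordinatewise) (intro continuous_intros)
lemma cont_snd_snd_coord: "continuous_on UNIV (\<lambda>y::'a::topological_space\<times>'b::topological_space\<times>(nat\<Rightarrow>real). snd (snd y) t)"
  by (rule continuous_on_product_then_coordinatewise) (intro continuous_intros)

lemma closed_guard: "(Q \<Longrightarrow> closed {x. P x}) \<Longrightarrow> closed {x. Q \<longrightarrow> P x}"
  by (cases Q) auto

lemma stage2_exists:
  assumes ne: "stage2_feas T D Pmax Elo Ehi eta e1 pstar estar \<noteq> {}"
  shows "\<exists>y. is_min (stage2_feas T D Pmax Elo Ehi eta e1 pstar estar) (stage2_obj T c lam) y"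
proof -
  define A where "A = stage2_feas T D Pmax Elo Ehi eta e1 pstar estar"
  define Z where "Z = {y::point2. \<forall>t. (t \<notin> {1..T} \<longrightarrow> fst y t = 0 \<and> fst (snd y) t = 0) \<and> (t \<notin> {2..T+1} \<longrightarrow> snd (snd y) t = 0)}"
  define Kd where "Kd = Pi UNIV (\<lambda>t. if t \<in> {1..T} then {0..Pmax} else {0::real})"
  define Ke where "Ke = Pi UNIV (\<lambda>t. if t \<in> {2..T+1} then {Elo..Ehi} else {0::real})"
  define proj where "proj = (\<lambda>y::point2. (\<lambda>t. if t\<in>{1..T} then fst y t else 0,
      \<lambda>t. if t\<in>{1..T} then fst (snd y) t else 0, \<lambda>t. if t\<in>{2..T+1} then snd (snd y) t else 0))"
  have Aeq: "A = {y. \<forall>t. t \<in> {1..T} \<longrightarrow>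
        pstar \<ge> D t - fst y t + fst (snd y) t \<and>
        snd (snd y) (Suc t) = prev_soc e1 (snd (snd y)) t - (1/eta) * fst y t + eta * fst (snd y) t \<and>
        0 \<le> fst y t \<and> fst y t \<le> Pmax \<and> 0 \<le> fst (snd y) t \<and> fst (snd y) t \<le> Pmax \<and>
        Elo \<le> snd (snd y) (Suc t) \<and> snd (snd y) (Suc t) \<le> Ehi \<and> snd (snd y) (Suc t) \<ge> estar (Suc t)}"
    unfolding A_def stage2_feas_def feasS_def by auto
  have cprev: "continuous_on UNIV (\<lambda>y::point2. prev_soc e1 (snd (snd y)) t)" for t
    by (cases "t = 1") (auto simp: prev_soc_def intro: cont_snd_snd_coord)
  have clA: "closed A"
    unfolding Aeq
    apply (rule closed_Collect_all)
    apply (rule closed_guard)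
    apply (intro closed_Collect_conj closed_Collect_le closed_Collect_eq continuous_intros
        cont_fst_coord cont_fst_snd_coord cont_snd_snd_coord cprev)
    done
  have clZ: "closed Z"
    unfolding Z_def
    apply (rule closed_Collect_all)
    apply (intro closed_Collect_conj)
     apply (rule closed_guard, intro closed_Collect_conj closed_Collect_eq continuous_intros
        cont_fst_coord cont_fst_snd_coord cont_snd_snd_coord)+
    done
  have cbox: "compact (Kd \<times> Kd \<times> Ke)"
    unfolding Kd_def Ke_def by (intro compact_Times compact_box_fun) auto
  have sub: "A \<inter> Z \<subseteq> Kd \<times> Kd \<times> Ke"
  proof
    fix y assume y: "y \<in> A \<inter> Z"
    obtain d q e where yeq: "y = (d, q, e)" by (cases y) auto
    have "d \<in> Kd" unfolding Kd_def using y yeq by (auto simp: Aeq Z_def)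
    moreover have "q \<in> Kd" unfolding Kd_def using y yeq by (auto simp: Aeq Z_def)
    moreover have "e \<in> Ke"
    proof -
      have "e t \<in> (if t \<in> {2..T+1} then {Elo..Ehi} else {0})" for t
      proof (cases "t \<in> {2..T+1}")
        case True
        then obtain s where "t = Suc s" "s \<in> {1..T}" by (cases t) auto
        then show ?thesis using y yeq True by (auto simp: Aeq)
      next
        case False then show ?thesis using y yeq by (auto simp: Z_def)
      qed
      then show ?thesis unfolding Ke_def by auto
    qed
    ultimately show "y \<in> Kd \<times> Kd \<times> Ke" using yeq by auto
  qed
  have cR: "compact (A \<inter> Z)"
  proof -
    have "A \<inter> Z = (Kd \<times> Kd \<times> Ke) \<inter> (A \<inter> Z)" using sub by auto
    then show ?thesis using compact_Int_closed[OF cbox closed_Int[OF clA clZ]] by simp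
  qed
  have projA: "proj y \<in> A \<inter> Z" if "y \<in> A" for y
  proof -
    have pe: "prev_soc e1 (\<lambda>t. if t\<in>{2..T+1} then snd (snd y) t else 0) t = prev_soc e1 (snd (snd y)) t"
      if "t \<in> {1..T}" for t using that by (auto simp: prev_soc_def)
    show ?thesis using that unfolding proj_def by (auto simp: Aeq Z_def prev_soc_def)
  qed
  have projobj: "stage2_obj T c lam (proj y) = stage2_obj T c lam y" for y
    unfolding proj_def stage2_obj_def by (cases y) (auto intro!: sum.cong)
  have ne2: "A \<inter> Z \<noteq> {}" using ne projA unfolding A_def by blast
  have cobj: "continuous_on (A \<inter> Z) (stage2_obj T c lam)"
  proof -
    have "stage2_obj T c lam = (\<lambda>y. \<Sum>t = 1..T. c * fst y t - lam t * (fst y t - fst (snd y) t))"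
      unfolding stage2_obj_def by (auto simp: case_prod_beta)
    moreover have "continuous_on UNIV (\<lambda>y::point2. \<Sum>t = 1..T. c * fst y t - lam t * (fst y t - fst (snd y) t))"
      by (intro continuous_intros cont_fst_coord cont_fst_snd_coord)
    ultimately show ?thesis by (metis continuous_on_subset subset_UNIV)
  qed
  obtain y where y: "y \<in> A \<inter> Z" "\<forall>z\<in>A \<inter> Z. stage2_obj T c lam y \<le> stage2_obj T c lam z"
    using continuous_attains_inf[OF cR ne2 cobj] by blast
  have "is_min A (stage2_obj T c lam) y"
    unfolding is_min_def
  proof (intro conjI ballI)
    show "y \<in> A" using y by auto
    fix z assume "z \<in> A"
    then have "stage2_obj T c lam y \<le> stage2_obj T c lam (proj z)" using y projA by auto
    then show "stage2_obj T c lam y \<le> stage2_obj T c lam z" by (simp add: projobj)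
  qed
  then show ?thesis unfolding A_def by blast
qed


lemma le1: fixes x y :: real shows "0 \<le> x \<Longrightarrow> y \<le> 1 \<Longrightarrow> y*x \<le> x"
  using mult_right_mono[of y 1 x] by linarith

definition Ub :: "real \<Rightarrow> real \<Rightarrow> real \<Rightarrow> real \<Rightarrow> real" where
  "Ub Pmax eta Dt p = min (eta*Pmax) (min (eta*(p - Dt)) ((p - Dt)/eta))"
definition cdis :: "real \<Rightarrow> real \<Rightarrow> real" where
  "cdis eta x = (if 0 \<le> x then 0 else -(eta*x))"
definition cchg :: "real \<Rightarrow> real \<Rightarrow> real" where
  "cchg eta x = (if 0 \<le> x then x/eta else 0)"
definition phi :: "real \<Rightarrow> real \<Rightarrow> real \<Rightarrow> real \<Rightarrow> real" where
  "phi c eta l x = (if 0 \<le> x then l*x/eta else (c-l)*(-(eta*x)))"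

lemma achieve:
  fixes eta d q P Dt p :: real
  assumes "0 < eta" "eta \<le> 1" "0 \<le> d" "d \<le> P" "0 \<le> q" "q \<le> P" "Dt - d + q \<le> p"
  shows "-P/eta \<le> eta*q - d/eta \<and> eta*q - d/eta \<le> Ub P eta Dt p"
proof -
  have a: "eta * d \<le> d" using assms le1 by auto
  have b: "d \<le> d/eta" using assms le1[of d eta] by (simp add: le_divide_eq mult.commute)
  have a2: "eta * q \<le> q" using assms le1 by auto
  have b2: "q \<le> q/eta" using assms le1[of q eta] by (simp add: le_divide_eq mult.commute)
  have c1: "d/eta \<le> P/eta" using assms by (simp add: divide_right_mono)
  have "eta*q \<ge> 0" using assms by simp
  then have l: "-P/eta \<le> eta*q - d/eta" using c1 by linarith
  have u1: "eta*q - d/eta \<le> eta*P"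
  proof -
    have "eta*q \<le> eta*P" using assms by (intro mult_left_mono) auto
    moreover have "0 \<le> d/eta" using assms by simp
    ultimately show ?thesis by linarith
  qed
  have u2: "eta*q - d/eta \<le> eta*(p - Dt)"
  proof -
    have "eta*(q - d) \<le> eta*(p - Dt)" using assms by (intro mult_left_mono) auto
    then show ?thesis using a b by (simp add: algebra_simps)
  qed
  have u3: "eta*q - d/eta \<le> (p - Dt)/eta"
  proof -
    have "(q - d)/eta \<le> (p - Dt)/eta" using assms by (intro divide_right_mono) auto
    then show ?thesis using a2 b2 by (simp add: diff_divide_distrib)
  qed
  show ?thesis using l u1 u2 u3 by (simp add: Ub_def)
qed

lemma cost:
  fixes eta d q c l :: real
  assumes "0 < eta" "eta \<le> 1" "0 \<le> d" "0 \<le> q" "0 \<le> l" "0 \<le> c"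
  shows "phi c eta l (eta*q - d/eta) \<le> c*d - l*(d - q)"
proof (cases "0 \<le> eta*q - d/eta")
  case True
  have e: "l*(eta*q - d/eta)/eta = l*q - l*d/eta^2"
    using assms by (simp add: field_simps power2_eq_square)
  have "eta^2 \<le> 1" using assms by (simp add: power_le_one)
  then have "l*d*eta^2 \<le> l*d" using assms mult_left_mono[of "eta^2" 1 "l*d"] by simp
  then have "l*d \<le> l*d/eta^2" using assms by (simp add: le_divide_eq)
  moreover have "0 \<le> c*d" using assms by simp
  ultimately show ?thesis using True e by (simp add: phi_def algebra_simps)
next
  case False
  have e: "(c-l)*(-(eta*(eta*q - d/eta))) = (c-l)*d - (c-l)*eta^2*q"
    using assms by (simp add: field_simps power2_eq_square)
  have "eta^2 \<le> 1" using assms by (simp add: power_le_one)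
  then have "eta^2*q \<le> q" using assms le1 by auto
  then have "l*(eta^2*q) \<le> l*q" using assms by (intro mult_left_mono) auto
  then have "l*eta^2*q \<le> l*q" by (simp add: mult.assoc)
  moreover have "0 \<le> c*eta^2*q" using assms by simp
  ultimately show ?thesis using False e by (simp add: phi_def algebra_simps)
qed

lemma canon:
  fixes eta P Dt p x c l :: real
  assumes "0 < eta" "eta \<le> 1" "-P/eta \<le> x" "x \<le> Ub P eta Dt p" "0 \<le> P"
  shows "0 \<le> cdis eta x \<and> cdis eta x \<le> P \<and> 0 \<le> cchg eta x \<and> cchg eta x \<le> P \<and>
         eta * cchg eta x - cdis eta x / eta = x \<and> Dt - cdis eta x + cchg eta x \<le> p \<and>
         c * cdis eta x - l * (cdis eta x - cchg eta x) = phi c eta l x"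
proof (cases "0 \<le> x")
  case True
  have "x \<le> eta*P" "x \<le> eta*(p - Dt)" using assms by (auto simp: Ub_def)
  then have "x/eta \<le> P" "x/eta \<le> p - Dt" using assms by (auto simp: divide_le_eq mult.commute)
  then show ?thesis using True assms by (auto simp: cdis_def cchg_def phi_def field_simps)
next
  case False
  have "x \<le> (p - Dt)/eta" using assms by (auto simp: Ub_def)
  then have "eta*x \<le> p - Dt" using assms by (auto simp: le_divide_eq mult.commute)
  moreover have "-(eta*x) \<le> P"
  proof -
    have "(-P/eta)*eta \<le> x*eta" using assms by (intro mult_right_mono) auto
    then show ?thesis using assms by (simp add: algebra_simps)
  qed
  moreover have "eta*x \<le> 0" using False assms by (simp add: mult_nonneg_nonpos)
  ultimately show ?thesis using False assms by (auto simp: cdis_def cchg_def phi_def field_simps)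
qed

lemma philip:
  fixes eta c l a b :: real
  assumes "0 < eta" "0 \<le> l" "0 \<le> c"
  shows "phi c eta l a \<le> phi c eta l b + (l/eta + (c+l)*eta)*\<bar>a-b\<bar>"
proof -
  have A: "0 \<le> l/eta" "0 \<le> (c+l)*eta" using assms by auto
  have s1: "l*a/eta - l*b/eta = (l/eta)*(a-b)" using assms by (simp add: field_simps)
  have s2: "(c-l)*(-(eta*a)) - (c-l)*(-(eta*b)) = ((l-c)*eta)*(a-b)" by (simp add: algebra_simps)
  have k1: "(l/eta)*(a-b) \<le> (l/eta)*\<bar>a-b\<bar>" using A by (intro mult_left_mono) auto
  have k2: "((l-c)*eta)*(a-b) \<le> ((c+l)*eta)*\<bar>a-b\<bar>"
  proof -
    have "((l-c)*eta)*(a-b) \<le> \<bar>(l-c)*eta\<bar>*\<bar>a-b\<bar>" by (metis abs_ge_self abs_mult)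
    also have "\<bar>(l-c)*eta\<bar> \<le> (c+l)*eta" using assms by (simp add: abs_mult)
    then have "\<bar>(l-c)*eta\<bar>*\<bar>a-b\<bar> \<le> (c+l)*eta*\<bar>a-b\<bar>" by (intro mult_right_mono) auto
    finally show ?thesis .
  qed
  show ?thesis
  proof (cases "0 \<le> a")
    case a: True
    show ?thesis
    proof (cases "0 \<le> b")
      case True
      have "phi c eta l a = l*a/eta" "phi c eta l b = l*b/eta" using a True by (auto simp: phi_def)
      moreover have "0 \<le> (c+l)*eta*\<bar>a-b\<bar>" using A assms by (intro mult_nonneg_nonneg) auto
      ultimately show ?thesis using s1 k1 by (simp add: algebra_simps)
    next
      case False
      have "(l/eta)*a \<le> (l/eta)*\<bar>a-b\<bar>" using a False A by (intro mult_left_mono) auto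
      then have "l*a/eta \<le> (l/eta)*\<bar>a-b\<bar>" by simp
      moreover have "0 \<le> (c-l)*(-(eta*b)) + ((c+l)*eta)*\<bar>a-b\<bar>"
      proof -
        have "(l-c)*(-(eta*b)) \<le> ((c+l)*eta)*\<bar>a-b\<bar>"
        proof -
          have "(l-c)*(-(eta*b)) = ((l-c)*eta)*(-b)" by simp
          also have "\<dots> \<le> ((c+l)*eta)*\<bar>a-b\<bar>"
          proof -
            have "((l-c)*eta)*(-b) \<le> \<bar>(l-c)*eta\<bar>*(-b)" using False by (intro mult_right_mono) auto
            also have "\<dots> \<le> \<bar>(l-c)*eta\<bar>*\<bar>a-b\<bar>" using False a by (intro mult_left_mono) auto
            also have "\<dots> \<le> (c+l)*eta*\<bar>a-b\<bar>" using assms by (intro mult_right_mono) (auto simp: abs_mult)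
            finally show ?thesis .
          qed
          finally show ?thesis .
        qed
        then show ?thesis by (simp add: algebra_simps)
      qed
      ultimately show ?thesis using a False A by (simp add: phi_def algebra_simps)
    qed
  next
    case a: False
    show ?thesis
    proof (cases "0 \<le> b")
      case True
      have "(c-l)*(-(eta*a)) \<le> ((c+l)*eta)*\<bar>a-b\<bar>"
      proof -
        have "(c-l)*(-(eta*a)) = ((c-l)*eta)*(-a)" by simp
        also have "\<dots> \<le> \<bar>(c-l)*eta\<bar>*(-a)" using a by (intro mult_right_mono) auto
        also have "\<dots> \<le> \<bar>(c-l)*eta\<bar>*\<bar>a-b\<bar>" using True a by (intro mult_left_mono) auto
        also have "\<dots> \<le> (c+l)*eta*\<bar>a-b\<bar>" using assms by (intro mult_right_mono) (auto simp: abs_mult)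
        finally show ?thesis .
      qed
      moreover have "0 \<le> l*b/eta" using True assms by simp
      moreover have "0 \<le> (l/eta)*\<bar>a-b\<bar>" using A by (intro mult_nonneg_nonneg) auto
      ultimately show ?thesis using a True by (simp add: phi_def algebra_simps)
    next
      case False
      have "phi c eta l a = (c-l)*(-(eta*a))" "phi c eta l b = (c-l)*(-(eta*b))" using a False by (auto simp: phi_def)
      moreover have "0 \<le> l/eta*\<bar>a-b\<bar>" using A by (intro mult_nonneg_nonneg) auto
      ultimately show ?thesis using s2 k2 by (simp add: algebra_simps)
    qed
  qed
qed

lemma Ulip:
  fixes eta P Dt p p' :: real
  assumes "0 < eta" "eta \<le> 1" "p' \<le> p"
  shows "Ub P eta Dt p - (p-p')/eta \<le> Ub P eta Dt p'"
proof -
  have z: "0 \<le> (p-p')/eta" using assms by simp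
  have e1: "eta*(p-p') \<le> (p-p')/eta"
  proof -
    have "eta*(p-p') \<le> p - p'" using assms le1 by auto
    also have "\<dots> \<le> (p-p')/eta" using assms le1[of "p-p'" eta] by (simp add: le_divide_eq mult.commute)
    finally show ?thesis .
  qed
  have "Ub P eta Dt p \<le> eta*P" "Ub P eta Dt p \<le> eta*(p - Dt)" "Ub P eta Dt p \<le> (p - Dt)/eta"
    by (auto simp: Ub_def)
  moreover have "eta*(p' - Dt) = eta*(p - Dt) - eta*(p-p')" by (simp add: algebra_simps)
  moreover have "(p' - Dt)/eta = (p - Dt)/eta - (p-p')/eta" by (simp add: diff_divide_distrib)
  ultimately show ?thesis using z e1 unfolding Ub_def[of P eta Dt p'] by linarith
qed


primrec gcap :: "(nat \<Rightarrow> real) \<Rightarrow> (nat \<Rightarrow> real) \<Rightarrow> nat \<Rightarrow> real" where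
  "gcap E u 0 = E 1"
| "gcap E u (Suc s) = (if s = 0 then E 1 else min (E (Suc s)) (gcap E u s + u s))"

primrec hreq :: "real \<Rightarrow> nat \<Rightarrow> (nat \<Rightarrow> real) \<Rightarrow> nat \<Rightarrow> real" where
  "hreq lo T u 0 = lo"
| "hreq lo T u (Suc n) = max lo (hreq lo T u n - u (T - n))"

lemma max_diff_bounds:
  fixes a0 a1 b0 b1 L U :: real
  assumes "L \<le> a1 - a0" "a1 - a0 \<le> U" "L \<le> b1 - b0" "b1 - b0 \<le> U"
  shows "L \<le> max a1 b1 - max a0 b0 \<and> max a1 b1 - max a0 b0 \<le> U"
  using assms by (auto simp: max_def)

lemma min_diff_bounds:
  fixes a0 a1 b0 b1 L U :: real
  assumes "L \<le> a1 - a0" "a1 - a0 \<le> U" "L \<le> b1 - b0" "b1 - b0 \<le> U"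
  shows "L \<le> min a1 b1 - min a0 b0 \<and> min a1 b1 - min a0 b0 \<le> U"
  using assms by (auto simp: min_def)

context
  fixes T :: nat and D lam :: "nat \<Rightarrow> real" and c Pmax Elo Ehi eta e1 :: real
  assumes lam_nonneg: "\<forall>t\<in>{1..T}. lam t \<ge> 0" and c_nonneg: "c \<ge> 0" and Pmax_pos: "Pmax > 0"
    and Elo0: "0 \<le> Elo" and EloEhi: "Elo \<le> Ehi" and eta0: "0 < eta" and eta1: "eta \<le> 1"
    and e1lo: "Elo \<le> e1" and e1hi: "e1 \<le> Ehi"
begin

lemma extr:
  assumes "(p,d,q,e) \<in> feasS T D Pmax Elo Ehi eta e1"
  shows "\<forall>t\<in>{1..T}. -Pmax/eta \<le> prev_soc e1 e (Suc t) - prev_soc e1 e t \<and>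
            prev_soc e1 e (Suc t) - prev_soc e1 e t \<le> Ub Pmax eta (D t) p \<and>
            phi c eta (lam t) (prev_soc e1 e (Suc t) - prev_soc e1 e t) \<le> c * d t - lam t * (d t - q t)"
    and "\<forall>s\<in>{1..T+1}. Elo \<le> prev_soc e1 e s \<and> prev_soc e1 e s \<le> Ehi"
proof -
  show "\<forall>t\<in>{1..T}. -Pmax/eta \<le> prev_soc e1 e (Suc t) - prev_soc e1 e t \<and>
            prev_soc e1 e (Suc t) - prev_soc e1 e t \<le> Ub Pmax eta (D t) p \<and>
            phi c eta (lam t) (prev_soc e1 e (Suc t) - prev_soc e1 e t) \<le> c * d t - lam t * (d t - q t)"
  proof
    fix t assume t: "t \<in> {1..T}"
    have h: "p \<ge> D t - d t + q t" "e (Suc t) = prev_soc e1 e t - d t / eta + eta * q t"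
        "0 \<le> d t" "d t \<le> Pmax" "0 \<le> q t" "q t \<le> Pmax"
      using assms t unfolding feasS_def by auto
    have ps: "prev_soc e1 e (Suc t) = e (Suc t)" using t by (simp add: prev_soc_def)
    have dl: "prev_soc e1 e (Suc t) - prev_soc e1 e t = eta * q t - d t / eta" using h(2) ps by simp
    show "-Pmax/eta \<le> prev_soc e1 e (Suc t) - prev_soc e1 e t \<and>
            prev_soc e1 e (Suc t) - prev_soc e1 e t \<le> Ub Pmax eta (D t) p \<and>
            phi c eta (lam t) (prev_soc e1 e (Suc t) - prev_soc e1 e t) \<le> c * d t - lam t * (d t - q t)"
      unfolding dl using achieve[OF eta0 eta1 h(3,4,5,6) h(1)] cost[OF eta0 eta1 h(3,5) _ c_nonneg, of "lam t"]
        lam_nonneg t by auto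
  qed
  show "\<forall>s\<in>{1..T+1}. Elo \<le> prev_soc e1 e s \<and> prev_soc e1 e s \<le> Ehi"
  proof
    fix s assume s: "s \<in> {1..T+1}"
    show "Elo \<le> prev_soc e1 e s \<and> prev_soc e1 e s \<le> Ehi"
    proof (cases "s = 1")
      case True then show ?thesis using e1lo e1hi by (simp add: prev_soc_def)
    next
      case False
      then obtain t where st: "s = Suc t" "t \<in> {1..T}" using s by (cases s) auto
      have all: "\<forall>t\<in>{1..T}. Elo \<le> e (Suc t) \<and> e (Suc t) \<le> Ehi"
        using assms unfolding feasS_def by auto
      have "prev_soc e1 e s = e (Suc t)" using st by (simp add: prev_soc_def)
      then show ?thesis using all st by auto
    qed
  qed
qed

lemma buildpt:
  assumes E1: "E 1 = e1"
    and dE: "\<forall>s\<in>{1..T}. -Pmax/eta \<le> E (Suc s) - E s \<and> E (Suc s) - E s \<le> Ub Pmax eta (D s) p"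
    and bE: "\<forall>s\<in>{2..T+1}. Elo \<le> E s \<and> E s \<le> Ehi"
  shows "(p, \<lambda>t. cdis eta (E (Suc t) - E t), \<lambda>t. cchg eta (E (Suc t) - E t), E) \<in> feasS T D Pmax Elo Ehi eta e1"
    and "stage2_obj T c lam (\<lambda>t. cdis eta (E (Suc t) - E t), \<lambda>t. cchg eta (E (Suc t) - E t), E)
         = (\<Sum>t=1..T. phi c eta (lam t) (E (Suc t) - E t))"
proof -
  have pe: "prev_soc e1 E t = E t" for t using E1 by (simp add: prev_soc_def)
  have C: "0 \<le> cdis eta (E (Suc t) - E t) \<and> cdis eta (E (Suc t) - E t) \<le> Pmax \<and>
         0 \<le> cchg eta (E (Suc t) - E t) \<and> cchg eta (E (Suc t) - E t) \<le> Pmax \<and>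
         eta * cchg eta (E (Suc t) - E t) - cdis eta (E (Suc t) - E t) / eta = E (Suc t) - E t \<and>
         D t - cdis eta (E (Suc t) - E t) + cchg eta (E (Suc t) - E t) \<le> p \<and>
         c * cdis eta (E (Suc t) - E t) - lam t * (cdis eta (E (Suc t) - E t) - cchg eta (E (Suc t) - E t))
           = phi c eta (lam t) (E (Suc t) - E t)" if t: "t \<in> {1..T}" for t
    using canon[of eta Pmax "E (Suc t) - E t" "D t" p c "lam t"] dE t eta0 eta1 Pmax_pos by auto
  show "(p, \<lambda>t. cdis eta (E (Suc t) - E t), \<lambda>t. cchg eta (E (Suc t) - E t), E) \<in> feasS T D Pmax Elo Ehi eta e1"
    unfolding feasS_def
  proof (clarify, intro ballI conjI)
    fix t assume t: "t \<in> {1..T}"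
    note Ct = C[OF t]
    have b: "Suc t \<in> {2..T+1}" using t by auto
    show "E (Suc t) = prev_soc e1 E t - cdis eta (E (Suc t) - E t) / eta + eta * cchg eta (E (Suc t) - E t)"
      using Ct pe[of t] by linarith
  qed (use C bE in \<open>auto\<close>)
  show "stage2_obj T c lam (\<lambda>t. cdis eta (E (Suc t) - E t), \<lambda>t. cchg eta (E (Suc t) - E t), E)
         = (\<Sum>t=1..T. phi c eta (lam t) (E (Suc t) - E t))"
    unfolding stage2_obj_def using C by (auto intro!: sum.cong)
qed

lemma latt:
  assumes x: "(p,d,q,e) \<in> feasS T D Pmax Elo Ehi eta e1" and z: "(p,dz,qz,ez) \<in> feasS T D Pmax Elo Ehi eta e1"
  shows "\<exists>d' q' e'. (p,d',q',e') \<in> feasS T D Pmax Elo Ehi eta e1 \<and>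
           (\<forall>t\<in>{1..T}. e' (Suc t) = min (e (Suc t)) (ez (Suc t)))"
proof -
  define E where "E = prev_soc e1 e"
  define Ez where "Ez = prev_soc e1 ez"
  define E' where "E' = (\<lambda>s. min (E s) (Ez s))"
  note X1 = extr(1)[OF x, folded E_def] and X2 = extr(2)[OF x, folded E_def]
  note Z1 = extr(1)[OF z, folded Ez_def] and Z2 = extr(2)[OF z, folded Ez_def]
  have E1: "E' 1 = e1" unfolding E'_def E_def Ez_def by (simp add: prev_soc_def)
  have dE: "\<forall>s\<in>{1..T}. -Pmax/eta \<le> E' (Suc s) - E' s \<and> E' (Suc s) - E' s \<le> Ub Pmax eta (D s) p"
  proof
    fix s assume s: "s \<in> {1..T}"
    show "-Pmax/eta \<le> E' (Suc s) - E' s \<and> E' (Suc s) - E' s \<le> Ub Pmax eta (D s) p"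
      unfolding E'_def by (rule min_diff_bounds) (use X1 Z1 s in auto)
  qed
  have bE: "\<forall>s\<in>{2..T+1}. Elo \<le> E' s \<and> E' s \<le> Ehi"
  proof
    fix s assume s: "s \<in> {2..T+1}"
    then have "s \<in> {1..T+1}" by auto
    then show "Elo \<le> E' s \<and> E' s \<le> Ehi" using X2 Z2 unfolding E'_def by (auto simp: min_def)
  qed
  have "\<forall>t\<in>{1..T}. E' (Suc t) = min (e (Suc t)) (ez (Suc t))"
    unfolding E'_def E_def Ez_def by (simp add: prev_soc_def)
  then show ?thesis using buildpt(1)[OF E1 dE bE] by blast
qed

lemma lip:
  assumes x: "(p,d,q,e) \<in> feasS T D Pmax Elo Ehi eta e1" and x0: "(p',d0,q0,e0) \<in> feasS T D Pmax Elo Ehi eta e1"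
    and pp: "p' \<le> p"
  shows "\<exists>d'' q'' e''. (p',d'',q'',e'') \<in> feasS T D Pmax Elo Ehi eta e1 \<and>
     (\<Sum>t=1..T. e'' (Suc t)) \<le> (\<Sum>t=1..T. e (Suc t)) + real T * (real T * ((p-p')/eta)) \<and>
     stage2_obj T c lam (d'',q'',e'') \<le> stage2_obj T c lam (d,q,e)
        + (\<Sum>t=1..T. lam t/eta + (c+lam t)*eta) * (2*(real T*((p-p')/eta)))"
proof -
  define E where "E = prev_soc e1 e"
  define E0 where "E0 = prev_soc e1 e0"
  define u where "u = (\<lambda>s. Ub Pmax eta (D s) p')"
  define ep where "ep = (p-p')/eta"
  define g where "g = gcap E u"
  define h where "h = (\<lambda>s. hreq Elo T u (T+1-s))"
  define E'' where "E'' = (\<lambda>s. max (g s) (h s))"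
  note X1 = extr(1)[OF x, folded E_def] and X2 = extr(2)[OF x, folded E_def]
  note Z1 = extr(1)[OF x0, folded E0_def u_def] and Z2 = extr(2)[OF x0, folded E0_def]
  have ep0: "0 \<le> ep" unfolding ep_def using pp eta0 by simp
  have ul: "Ub Pmax eta (D s) p - ep \<le> u s" for s
    unfolding u_def ep_def using Ulip[OF eta0 eta1 pp] by simp
  have E1: "E 1 = e1" "E0 1 = e1" unfolding E_def E0_def by (simp_all add: prev_soc_def)
  have gS: "g (Suc s) = min (E (Suc s)) (g s + u s)" if "1 \<le> s" for s
    using that unfolding g_def by simp
  have g1: "g 1 = E 1" unfolding g_def by simp
  have hS: "h s = max Elo (h (Suc s) - u s)" if "s \<le> T" for s
  proof -
    have "T + 1 - s = Suc (T - s)" using that by simp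
    moreover have "T - (T - s) = s" using that by simp
    moreover have "T + 1 - Suc s = T - s" by simp
    ultimately show ?thesis unfolding h_def by simp
  qed
  have gb: "1 \<le> s \<longrightarrow> s \<le> T+1 \<longrightarrow> g s \<le> E s \<and> E s - (real s - 1) * ep \<le> g s" for s
  proof (induction s)
    case 0 then show ?case by simp
  next
    case (Suc s)
    show ?case
    proof (cases "s = 0")
      case True then show ?thesis using g1 by simp
    next
      case False
      show ?thesis
      proof (intro impI)
        assume "1 \<le> Suc s" "Suc s \<le> T + 1"
        then have s: "s \<in> {1..T}" "1 \<le> s" using False by auto
        have IH: "g s \<le> E s" "E s - (real s - 1) * ep \<le> g s" using Suc.IH s by auto
        have X: "E (Suc s) - E s \<le> Ub Pmax eta (D s) p" using X1 s(1) by auto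
        have "E (Suc s) - real s * ep \<le> g s + u s" using IH(2) X ul[of s] by (simp add: algebra_simps)
        moreover have "E (Suc s) - real s * ep \<le> E (Suc s)" using ep0 by simp
        ultimately show "g (Suc s) \<le> E (Suc s) \<and> E (Suc s) - (real (Suc s) - 1) * ep \<le> g (Suc s)"
          using gS[OF s(2)] by simp
      qed
    qed
  qed
  have hb: "n \<le> T \<longrightarrow> Elo \<le> hreq Elo T u n \<and> hreq Elo T u n \<le> E0 (T+1-n) \<and>
              hreq Elo T u n \<le> E (T+1-n) + real n * ep" for n
  proof (induction n)
    case 0
    have "T+1 \<in> {1..T+1}" by simp
    then show ?case using X2 Z2 by auto
  next
    case (Suc n)
    show ?case
    proof
      assume n: "Suc n \<le> T"
      define s where "s = T - n"
      have s: "s \<in> {1..T}" "T + 1 - n = Suc s" "T + 1 - Suc n = s" "T - n = s" using n unfolding s_def by auto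
      have IH: "Elo \<le> hreq Elo T u n" "hreq Elo T u n \<le> E0 (Suc s)" "hreq Elo T u n \<le> E (Suc s) + real n * ep"
        using Suc.IH n s by auto
      have Z: "E0 (Suc s) - E0 s \<le> u s" using Z1 s(1) by (auto simp: u_def)
      have X: "E (Suc s) - E s \<le> Ub Pmax eta (D s) p" using X1 s(1) by auto
      have b0: "Elo \<le> E0 s" "Elo \<le> E s" using X2 Z2 s(1) by auto
      have "hreq Elo T u (Suc n) = max Elo (hreq Elo T u n - u s)" using s by simp
      moreover have "hreq Elo T u n - u s \<le> E0 s" using IH Z by linarith
      moreover have "hreq Elo T u n - u s \<le> E s + real (Suc n) * ep" using IH X ul[of s] by (simp add: algebra_simps)
      moreover have "Elo \<le> E s + real (Suc n) * ep" using b0 ep0 by (simp add: add_increasing2)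
      ultimately show "Elo \<le> hreq Elo T u (Suc n) \<and> hreq Elo T u (Suc n) \<le> E0 (T + 1 - Suc n) \<and>
              hreq Elo T u (Suc n) \<le> E (T + 1 - Suc n) + real (Suc n) * ep"
        using s b0 by auto
    qed
  qed
  have hb': "Elo \<le> h s \<and> h s \<le> E0 s \<and> h s \<le> E s + real T * ep" if "s \<in> {1..T+1}" for s
  proof -
    have "T + 1 - s \<le> T" "T + 1 - (T + 1 - s) = s" "real (T + 1 - s) \<le> real T" using that by auto
    then have "real (T + 1 - s) * ep \<le> real T * ep" using ep0 by (intro mult_right_mono) auto
    then show ?thesis using hb[of "T+1-s"] \<open>T + 1 - s \<le> T\<close> \<open>T + 1 - (T + 1 - s) = s\<close> unfolding h_def by auto
  qed
  have gb': "g s \<le> E s \<and> E s - real T * ep \<le> g s" if "s \<in> {1..T+1}" for s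
  proof -
    have "(real s - 1) * ep \<le> real T * ep" using that ep0 by (intro mult_right_mono) auto
    then show ?thesis using gb[of s] that by auto
  qed
  have E''1: "E'' 1 = e1"
  proof -
    have "h 1 \<le> E0 1" using hb'[of 1] by auto
    then show ?thesis unfolding E''_def using g1 E1 by auto
  qed
  have dE: "\<forall>s\<in>{1..T}. -Pmax/eta \<le> E'' (Suc s) - E'' s \<and> E'' (Suc s) - E'' s \<le> Ub Pmax eta (D s) p'"
  proof
    fix s assume s: "s \<in> {1..T}"
    have Z: "-Pmax/eta \<le> u s"
    proof -
      have "-Pmax/eta \<le> E0 (Suc s) - E0 s \<and> E0 (Suc s) - E0 s \<le> u s" using Z1 s unfolding u_def by auto
      then show ?thesis by linarith
    qed
    have X: "-Pmax/eta \<le> E (Suc s) - E s" using X1 s by auto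
    have gd: "-Pmax/eta \<le> g (Suc s) - g s \<and> g (Suc s) - g s \<le> u s"
      using gS[of s] s gb'[of s] Z X by (auto simp: min_def)
    have Lb0: "-Pmax/eta \<le> 0" using Pmax_pos eta0 by simp
    have "Elo \<le> h (Suc s)" using hb'[of "Suc s"] s by auto
    then have hd: "-Pmax/eta \<le> h (Suc s) - h s \<and> h (Suc s) - h s \<le> u s"
      using hS[of s] s Z Lb0 by (auto simp: max_def)
    show "-Pmax/eta \<le> E'' (Suc s) - E'' s \<and> E'' (Suc s) - E'' s \<le> Ub Pmax eta (D s) p'"
      unfolding E''_def u_def[symmetric] by (rule max_diff_bounds) (use gd hd in \<open>auto simp: u_def\<close>)
  qed
  have bE: "\<forall>s\<in>{2..T+1}. Elo \<le> E'' s \<and> E'' s \<le> Ehi"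
  proof
    fix s assume s: "s \<in> {2..T+1}"
    then have s1: "s \<in> {1..T+1}" by auto
    show "Elo \<le> E'' s \<and> E'' s \<le> Ehi" using hb'[OF s1] gb'[OF s1] X2 Z2 s1 unfolding E''_def by fastforce
  qed
  have dist: "\<bar>E'' s - E s\<bar> \<le> real T * ep" if "s \<in> {1..T+1}" for s
    using hb'[OF that] gb'[OF that] ep0 unfolding E''_def by (auto simp: max_def abs_le_iff)
  define d'' where "d'' = (\<lambda>t. cdis eta (E'' (Suc t) - E'' t))"
  define q'' where "q'' = (\<lambda>t. cchg eta (E'' (Suc t) - E'' t))"
  have inS: "(p', d'', q'', E'') \<in> feasS T D Pmax Elo Ehi eta e1"
    unfolding d''_def q''_def by (rule buildpt(1)[OF E''1 dE bE])
  have obj: "stage2_obj T c lam (d'', q'', E'') = (\<Sum>t=1..T. phi c eta (lam t) (E'' (Suc t) - E'' t))"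
    unfolding d''_def q''_def by (rule buildpt(2)[OF E''1 dE bE])
  have sumE: "(\<Sum>t=1..T. E'' (Suc t)) \<le> (\<Sum>t=1..T. e (Suc t)) + real T * (real T * ep)"
  proof -
    have "(\<Sum>t=1..T. E'' (Suc t)) \<le> (\<Sum>t=1..T. e (Suc t) + real T * ep)"
    proof (rule sum_mono)
      fix t assume t: "t \<in> {1..T}"
      have "E (Suc t) = e (Suc t)" using t unfolding E_def by (simp add: prev_soc_def)
      then show "E'' (Suc t) \<le> e (Suc t) + real T * ep" using dist[of "Suc t"] t by auto
    qed
    also have "\<dots> = (\<Sum>t=1..T. e (Suc t)) + real T * (real T * ep)" by (simp add: sum.distrib)
    finally show ?thesis .
  qed
  define M where "M = (\<lambda>t. lam t/eta + (c+lam t)*eta)"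
  have sumO: "(\<Sum>t=1..T. phi c eta (lam t) (E'' (Suc t) - E'' t)) \<le>
              stage2_obj T c lam (d,q,e) + (\<Sum>t=1..T. M t) * (2*(real T*ep))"
  proof -
    have "(\<Sum>t=1..T. phi c eta (lam t) (E'' (Suc t) - E'' t)) \<le>
          (\<Sum>t=1..T. (c * d t - lam t * (d t - q t)) + M t * (2*(real T*ep)))"
    proof (rule sum_mono)
      fix t assume t: "t \<in> {1..T}"
      have l0: "0 \<le> lam t" using lam_nonneg t by auto
      have M0: "0 \<le> M t" unfolding M_def using l0 c_nonneg eta0 by simp
      have d1: "\<bar>(E'' (Suc t) - E'' t) - (E (Suc t) - E t)\<bar> \<le> 2*(real T*ep)"
        using dist[of t] dist[of "Suc t"] t by auto
      have "phi c eta (lam t) (E'' (Suc t) - E'' t) \<le> phi c eta (lam t) (E (Suc t) - E t)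
             + M t * \<bar>(E'' (Suc t) - E'' t) - (E (Suc t) - E t)\<bar>"
        unfolding M_def by (rule philip[OF eta0 l0 c_nonneg])
      also have "\<dots> \<le> (c * d t - lam t * (d t - q t)) + M t * (2*(real T*ep))"
      proof -
        have "phi c eta (lam t) (E (Suc t) - E t) \<le> c * d t - lam t * (d t - q t)" using X1 t by auto
        then show ?thesis using mult_left_mono[OF d1 M0] by linarith
      qed
      finally show "phi c eta (lam t) (E'' (Suc t) - E'' t) \<le> (c * d t - lam t * (d t - q t)) + M t * (2*(real T*ep))" .
    qed
    also have "\<dots> = stage2_obj T c lam (d,q,e) + (\<Sum>t=1..T. M t) * (2*(real T*ep))"
      unfolding stage2_obj_def by (simp add: sum.distrib sum_distrib_right)
    finally show ?thesis .
  qed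
  show ?thesis
  proof (intro exI conjI)
    show "(p', d'', q'', E'') \<in> feasS T D Pmax Elo Ehi eta e1" by (rule inS)
    show "(\<Sum>t=1..T. E'' (Suc t)) \<le> (\<Sum>t=1..T. e (Suc t)) + real T * (real T * ((p-p')/eta))"
      using sumE unfolding ep_def .
    show "stage2_obj T c lam (d'',q'',E'') \<le> stage2_obj T c lam (d,q,e)
        + (\<Sum>t=1..T. lam t/eta + (c+lam t)*eta) * (2*(real T*((p-p')/eta)))"
      using sumO unfolding obj ep_def M_def .
  qed
qed

end

theorem proposition1:
  fixes T :: nat and D lam :: "nat \<Rightarrow> real" and c Pmax Elo Ehi eta e1 :: real
  assumes lam_nonneg: "\<forall>t\<in>{1..T}. lam t \<ge> 0"
    and c_nonneg: "c \<ge> 0"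
    and Pmax_pos: "Pmax > 0"
    and E_bounds: "0 \<le> Elo" "Elo \<le> Ehi"
    and eta_bounds: "0 < eta" "eta \<le> 1"
    and e1_bounds: "Elo \<le> e1" "e1 \<le> Ehi"
    and S_nonempty: "feasS T D Pmax Elo Ehi eta e1 \<noteq> {}"
  shows "\<exists>delta0 > 0. \<exists>K. \<forall>delta kappa pstar dstar qstar estar.
           0 < delta \<longrightarrow> delta < delta0 \<longrightarrow> 0 < kappa \<longrightarrow> K < kappa \<longrightarrow>
           is_min (feasS T D Pmax Elo Ehi eta e1) (stage1_obj T delta) (pstar, dstar, qstar, estar) \<longrightarrow>
           (\<forall>x. is_min (feasS T D Pmax Elo Ehi eta e1) (combined_obj T c lam D kappa) x
                  \<longrightarrow> fst x = pstar) \<and>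
           (\<exists>y. is_min (stage2_feas T D Pmax Elo Ehi eta e1 pstar estar) (stage2_obj T c lam) y) \<and>
           (\<forall>d q e. is_min (stage2_feas T D Pmax Elo Ehi eta e1 pstar estar) (stage2_obj T c lam) (d, q, e)
              \<longrightarrow> is_min (feasS T D Pmax Elo Ehi eta e1) (combined_obj T c lam D kappa) (pstar, d, q, e)
                 \<and> combined_obj T c lam D kappa (pstar, d, q, e)
                     = (\<Sum>t = 1..T. lam t * D t) + kappa * pstar + stage2_obj T c lam (d, q, e))"
proof -
  note LIP = lip[OF lam_nonneg c_nonneg Pmax_pos E_bounds eta_bounds e1_bounds]
  note LATT = latt[OF lam_nonneg c_nonneg Pmax_pos E_bounds eta_bounds e1_bounds]
  define SS where "SS = feasS T D Pmax Elo Ehi eta e1"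
  define M where "M = (\<Sum>t=1..T. lam t/eta + (c+lam t)*eta)"
  define K where "K = M * (2 * (real T / eta))"
  define delta0 where "delta0 = eta / (real T * real T + 1)"
  have Keq: "M * (2*(real T*(a/eta))) = K * a" for a
    unfolding K_def by (simp add: algebra_simps)
  have ident: "combined_obj T c lam D kappa (p, d, q, e) = (\<Sum>t = 1..T. lam t * D t) + kappa * p + stage2_obj T c lam (d, q, e)"
    for kappa p d q e
  proof -
    have "(\<Sum>t=1..T. c * d t + lam t * (D t - d t + q t)) = (\<Sum>t = 1..T. lam t * D t) + (\<Sum>t=1..T. c * d t - lam t * (d t - q t))"
      by (simp add: sum.distrib[symmetric] algebra_simps)
    then show ?thesis unfolding combined_obj_def stage2_obj_def by simp
  qed
  have d0pos: "0 < delta0" unfolding delta0_def using eta_bounds by (simp add: add_nonneg_pos)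
  show ?thesis
  proof (rule exI[of _ delta0], rule conjI[OF d0pos], rule exI[of _ K], (rule allI)+, (rule impI)+, intro conjI)
    fix delta kappa pstar dstar qstar estar
    assume dpos: "0 < delta" and dsmall: "delta < delta0" and kpos: "0 < kappa" and Kk: "K < kappa"
      and H: "is_min (feasS T D Pmax Elo Ehi eta e1) (stage1_obj T delta) (pstar, dstar, qstar, estar)"
    have xs: "(pstar, dstar, qstar, estar) \<in> SS" and opt: "\<And>y. y \<in> SS \<Longrightarrow> stage1_obj T delta (pstar, dstar, qstar, estar) \<le> stage1_obj T delta y"
      using H unfolding is_min_def SS_def by auto
    have dT: "delta * (real T * real T) < eta"
    proof -
      have "delta * (real T * real T + 1) < eta" using dsmall unfolding delta0_def
        by (simp add: less_divide_eq add_nonneg_pos)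
      moreover have "delta * (real T * real T) \<le> delta * (real T * real T + 1)" using dpos by simp
      ultimately show ?thesis by linarith
    qed
    have P1: "pstar \<le> p" if hx0: "(p, d, q, e) \<in> SS" for p d q e
    proof (rule ccontr)
      assume "\<not> pstar \<le> p"
      then have lt: "p < pstar" by simp
      obtain d'' q'' e'' where x'': "(p, d'', q'', e'') \<in> SS"
        and s'': "(\<Sum>t=1..T. e'' (Suc t)) \<le> (\<Sum>t=1..T. estar (Suc t)) + real T * (real T * ((pstar-p)/eta))"
        using LIP[OF xs[unfolded SS_def] hx0[unfolded SS_def]] lt unfolding SS_def by auto
      have a: "delta * (real T * (real T * ((pstar-p)/eta))) < pstar - p"
      proof -
        have "delta * (real T * (real T * ((pstar-p)/eta))) = (delta * (real T * real T)) * (pstar - p) / eta"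
          by (simp add: algebra_simps)
        also have "\<dots> < eta * (pstar - p) / eta"
          using dT lt eta_bounds by (intro divide_strict_right_mono mult_strict_right_mono) auto
        also have "\<dots> = pstar - p" using eta_bounds by simp
        finally show ?thesis .
      qed
      have "stage1_obj T delta (p, d'', q'', e'') = p + delta * (\<Sum>t=1..T. e'' (Suc t))"
        unfolding stage1_obj_def by simp
      also have "\<dots> \<le> p + delta * ((\<Sum>t=1..T. estar (Suc t)) + real T * (real T * ((pstar-p)/eta)))"
        using s'' dpos by (intro add_left_mono mult_left_mono) auto
      also have "\<dots> < pstar + delta * (\<Sum>t=1..T. estar (Suc t))"
        using a by (simp add: algebra_simps)
      also have "\<dots> = stage1_obj T delta (pstar, dstar, qstar, estar)" unfolding stage1_obj_def by simp
      finally show False using opt[OF x''] by simp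
    qed
    have P2: "estar (Suc t) \<le> ez (Suc t)" if z: "(pstar, dz, qz, ez) \<in> SS" and t: "t \<in> {1..T}" for dz qz ez t
    proof (rule ccontr)
      assume "\<not> estar (Suc t) \<le> ez (Suc t)"
      then have lt: "ez (Suc t) < estar (Suc t)" by simp
      obtain d' q' e' where x': "(pstar, d', q', e') \<in> SS" and me: "\<forall>t\<in>{1..T}. e' (Suc t) = min (estar (Suc t)) (ez (Suc t))"
        using LATT[OF xs[unfolded SS_def] z[unfolded SS_def]] unfolding SS_def by auto
      have "(\<Sum>t=1..T. e' (Suc t)) < (\<Sum>t=1..T. estar (Suc t))"
      proof (rule sum_strict_mono_ex1)
        show "finite {1..T}" by simp
        show "\<forall>x\<in>{1..T}. e' (Suc x) \<le> estar (Suc x)" using me by auto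
        show "\<exists>a\<in>{1..T}. e' (Suc a) < estar (Suc a)" using me t lt by (intro bexI[of _ t]) auto
      qed
      then have "stage1_obj T delta (pstar, d', q', e') < stage1_obj T delta (pstar, dstar, qstar, estar)"
        unfolding stage1_obj_def using dpos by simp
      then show False using opt[OF x'] by simp
    qed
    have P3: "\<exists>d'' q'' e''. (d'', q'', e'') \<in> stage2_feas T D Pmax Elo Ehi eta e1 pstar estar \<and>
               stage2_obj T c lam (d'', q'', e'') \<le> stage2_obj T c lam (d, q, e) + K * (p - pstar)"
      if x: "(p, d, q, e) \<in> SS" for p d q e
    proof -
      have pp: "pstar \<le> p" using P1[OF x] .
      obtain d'' q'' e'' where x'': "(pstar, d'', q'', e'') \<in> SS"
        and s'': "stage2_obj T c lam (d'',q'',e'') \<le> stage2_obj T c lam (d,q,e) + M * (2*(real T*((p-pstar)/eta)))"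
        using LIP[OF x[unfolded SS_def] xs[unfolded SS_def] pp] unfolding SS_def M_def by auto
      have "(d'', q'', e'') \<in> stage2_feas T D Pmax Elo Ehi eta e1 pstar estar"
        using x'' P2[OF x''] unfolding stage2_feas_def SS_def by auto
      then show ?thesis using s'' Keq by auto
    qed
    have s2ne: "(dstar, qstar, estar) \<in> stage2_feas T D Pmax Elo Ehi eta e1 pstar estar"
      using xs unfolding stage2_feas_def SS_def by auto
    show "\<forall>x. is_min (feasS T D Pmax Elo Ehi eta e1) (combined_obj T c lam D kappa) x \<longrightarrow> fst x = pstar"
    proof (intro allI impI)
      fix x assume hx: "is_min (feasS T D Pmax Elo Ehi eta e1) (combined_obj T c lam D kappa) x"
      obtain p d q e where xe: "x = (p, d, q, e)" by (cases x) auto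
      have xS: "(p, d, q, e) \<in> SS" and xopt: "\<And>y. y \<in> SS \<Longrightarrow> combined_obj T c lam D kappa (p, d, q, e) \<le> combined_obj T c lam D kappa y"
        using hx xe unfolding is_min_def SS_def by auto
      have "p = pstar"
      proof (rule ccontr)
        assume "p \<noteq> pstar"
        then have gt: "pstar < p" using P1[OF xS] by simp
        obtain d'' q'' e'' where y: "(d'', q'', e'') \<in> stage2_feas T D Pmax Elo Ehi eta e1 pstar estar"
          and sy: "stage2_obj T c lam (d'', q'', e'') \<le> stage2_obj T c lam (d, q, e) + K * (p - pstar)"
          using P3[OF xS] by auto
        have yS: "(pstar, d'', q'', e'') \<in> SS" using y unfolding stage2_feas_def SS_def by auto
        have "K * (p - pstar) < kappa * (p - pstar)" using Kk gt by (intro mult_strict_right_mono) auto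
        then have "combined_obj T c lam D kappa (pstar, d'', q'', e'') < combined_obj T c lam D kappa (p, d, q, e)"
          unfolding ident using sy by (simp add: algebra_simps)
        then show False using xopt[OF yS] by simp
      qed
      then show "fst x = pstar" using xe by simp
    qed
    show "\<exists>y. is_min (stage2_feas T D Pmax Elo Ehi eta e1 pstar estar) (stage2_obj T c lam) y"
      using stage2_exists s2ne by blast
    show "\<forall>d q e. is_min (stage2_feas T D Pmax Elo Ehi eta e1 pstar estar) (stage2_obj T c lam) (d, q, e)
              \<longrightarrow> is_min (feasS T D Pmax Elo Ehi eta e1) (combined_obj T c lam D kappa) (pstar, d, q, e)
                 \<and> combined_obj T c lam D kappa (pstar, d, q, e)
                     = (\<Sum>t = 1..T. lam t * D t) + kappa * pstar + stage2_obj T c lam (d, q, e)"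
    proof (intro allI impI conjI)
      fix d q e
      assume hy: "is_min (stage2_feas T D Pmax Elo Ehi eta e1 pstar estar) (stage2_obj T c lam) (d, q, e)"
      have yF: "(d, q, e) \<in> stage2_feas T D Pmax Elo Ehi eta e1 pstar estar"
        and yopt: "\<And>z. z \<in> stage2_feas T D Pmax Elo Ehi eta e1 pstar estar \<Longrightarrow> stage2_obj T c lam (d, q, e) \<le> stage2_obj T c lam z"
        using hy unfolding is_min_def by auto
      have yS: "(pstar, d, q, e) \<in> SS" using yF unfolding stage2_feas_def SS_def by auto
      show "combined_obj T c lam D kappa (pstar, d, q, e)
                     = (\<Sum>t = 1..T. lam t * D t) + kappa * pstar + stage2_obj T c lam (d, q, e)"
        by (rule ident)
      show "is_min (feasS T D Pmax Elo Ehi eta e1) (combined_obj T c lam D kappa) (pstar, d, q, e)"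
        unfolding is_min_def
      proof (intro conjI ballI)
        show "(pstar, d, q, e) \<in> feasS T D Pmax Elo Ehi eta e1" using yS unfolding SS_def .
        fix x assume "x \<in> feasS T D Pmax Elo Ehi eta e1"
        then obtain p' d' q' e' where xe: "x = (p', d', q', e')" and xS: "(p', d', q', e') \<in> SS"
          unfolding SS_def by (cases x) auto
        obtain d'' q'' e'' where y: "(d'', q'', e'') \<in> stage2_feas T D Pmax Elo Ehi eta e1 pstar estar"
          and sy: "stage2_obj T c lam (d'', q'', e'') \<le> stage2_obj T c lam (d', q', e') + K * (p' - pstar)"
          using P3[OF xS] by auto
        have pp: "pstar \<le> p'" using P1[OF xS] .
        have "K * (p' - pstar) \<le> kappa * (p' - pstar)" using Kk pp by (intro mult_right_mono) auto
        moreover have "stage2_obj T c lam (d, q, e) \<le> stage2_obj T c lam (d'', q'', e'')" using yopt[OF y] .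
        ultimately show "combined_obj T c lam D kappa (pstar, d, q, e) \<le> combined_obj T c lam D kappa x"
          unfolding xe ident using sy by (simp add: algebra_simps)
      qed
    qed
  qed
qed


end
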